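(* Let $M$ be a transversal matroid and $e\in E(M)$. Let $\mathcal A=(A_1,\ldots,A_r)$ be a presentation of $M$ with $r=r(M)$, such that for some $k$, $e\in A_i$ for all $i\le k$ and $e\notin A_j$ for all $j>k$. Let $G$ be a minimal $(e,\mathcal A)$-presenting graph which is a tree, and let $\phi$ be an $(e,\mathcal A)$-presenting map of $G$. Suppose $E(G)=\{\{u_1,v_1\},\{u_2,v_2\},\ldots,\{u_{k-1},v_{k-1}\}\}$. Then $$(A_{\phi(u_1)}\cup A_{\phi(v_1)}-e,\ \ldots,\ A_{\phi(u_{k-1})}\cup A_{\phi(v_{k-1})}-e,\ A_{k+1},A_{k+2},\ldots,A_r)$$ is a presentation of $M/e$.
   Context: A presentation $\mathcal A=(A_1,\ldots,A_r)$ (a sequence of not necessarily distinct subsets of $E$) of a transversal matroid $M=M[\mathcal A]$ means the independent sets of $M$ are exactly the partial transversals of $\mathcal A$, i.e. sets $\{x_1,\ldots,x_m\}$ of distinct elements with distinct indices $k_1,\ldots,k_m\in[r]$ and $x_i\in A_{k_i}$. Write $\mathrm{cl}^*_M$ for the closure operator of the dual matroid $M^*$. A graph $G$ is an $(e,\mathcal A)$-presenting graph if there is a bijection $\phi:V(G)\to\{i\in[r]: e\in A_i\}$ such that for all distinct $v_1,v_2\in V(G)$, the subgraph of $G$ induced by $\{u\in V(G): A_{\phi(u)}\subseteq \mathrm{cl}^*_M(A_{\phi(v_1)}\cup A_{\phi(v_2)})\}$ is connected; $\phi$ is then an $(e,\mathcal A)$-presenting map of $G$. $G$ is a minimal $(e,\mathcal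 A)$-presenting graph if it is $(e,\mathcal A)$-presenting and deleting any single edge gives a graph that is not $(e,\mathcal A)$-presenting. *)

theory Defs
  imports Main
begin

definition mrank :: "('a set \<Rightarrow> bool) \<Rightarrow> 'a set \<Rightarrow> nat" where
  "mrank indep X = Max (card ` {I. I \<subseteq> X \<and> indep I})"

definition mbasis :: "'a set \<Rightarrow> ('a set \<Rightarrow> bool) \<Rightarrow> 'a set \<Rightarrow> bool" where
  "mbasis E indep B \<longleftrightarrow> B \<subseteq> E \<and> indep B \<and> (\<forall>I. I \<subseteq> E \<and> indep I \<and> B \<subseteq> I \<longrightarrow> I = B)"

definition mclosure :: "'a set \<Rightarrow> ('a set \<Rightarrow> bool) \<Rightarrow> 'a set \<Rightarrow> 'a set" where
  "mclosure E indep X = {x \<in> E. mrank indep (insert x X) = mrank indep X}"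

definition dual_indep :: "'a set \<Rightarrow> ('a set \<Rightarrow> bool) \<Rightarrow> 'a set \<Rightarrow> bool" where
  "dual_indep E indep I \<longleftrightarrow> I \<subseteq> E \<and> (\<exists>B. mbasis E indep B \<and> B \<inter> I = {})"

definition dual_closure :: "'a set \<Rightarrow> ('a set \<Rightarrow> bool) \<Rightarrow> 'a set \<Rightarrow> 'a set" where
  "dual_closure E indep X = mclosure E (dual_indep E indep) X"

definition contract_indep :: "'a set \<Rightarrow> ('a set \<Rightarrow> bool) \<Rightarrow> 'a \<Rightarrow> 'a set \<Rightarrow> bool" where
  "contract_indep E indep e I \<longleftrightarrow> I \<subseteq> E - {e} \<and>
     (if indep {e} then indep (insert e I) else indep I)"

text \<open>Partial transversals of the set system As = (As!0, ..., As!(r-1)) (0-indexed).\<close>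
definition partial_transversal :: "'a set \<Rightarrow> 'a set list \<Rightarrow> 'a set \<Rightarrow> bool" where
  "partial_transversal E As X \<longleftrightarrow> X \<subseteq> E \<and>
     (\<exists>f. inj_on f X \<and> (\<forall>x\<in>X. f x < length As \<and> x \<in> As ! f x))"

definition is_presentation :: "'a set \<Rightarrow> ('a set \<Rightarrow> bool) \<Rightarrow> 'a set list \<Rightarrow> bool" where
  "is_presentation E indep As \<longleftrightarrow> (\<forall>A\<in>set As. A \<subseteq> E) \<and>
     (\<forall>X. indep X \<longleftrightarrow> partial_transversal E As X)"

definition simple_graph :: "'v set \<Rightarrow> 'v set set \<Rightarrow> bool" where
  "simple_graph V Eg \<longleftrightarrow> finite V \<and> (\<forall>ed\<in>Eg. \<exists>u v. ed = {u, v} \<and> u \<noteq> v \<and> u \<in> V \<and> v \<in> V)"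

definition induced_connected :: "'v set set \<Rightarrow> 'v set \<Rightarrow> bool" where
  "induced_connected Eg S \<longleftrightarrow>
     (\<forall>x\<in>S. \<forall>y\<in>S. (x, y) \<in> {(a, b). a \<in> S \<and> b \<in> S \<and> {a, b} \<in> Eg}\<^sup>*)"

definition has_cycle :: "'v set \<Rightarrow> 'v set set \<Rightarrow> bool" where
  "has_cycle V Eg \<longleftrightarrow> (\<exists>cs. 3 \<le> length cs \<and> distinct cs \<and> set cs \<subseteq> V \<and>
     (\<forall>i<length cs. {cs ! i, cs ! ((i + 1) mod length cs)} \<in> Eg))"

definition is_tree :: "'v set \<Rightarrow> 'v set set \<Rightarrow> bool" where
  "is_tree V Eg \<longleftrightarrow> simple_graph V Eg \<and> V \<noteq> {} \<and> induced_connected Eg V \<and> \<not> has_cycle V Eg"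

definition presenting_map ::
  "'a set \<Rightarrow> 'a set list \<Rightarrow> 'a \<Rightarrow> 'v set \<Rightarrow> 'v set set \<Rightarrow> ('v \<Rightarrow> nat) \<Rightarrow> bool" where
  "presenting_map E As e V Eg \<phi> \<longleftrightarrow>
     bij_betw \<phi> V {i. i < length As \<and> e \<in> As ! i} \<and>
     (\<forall>v1\<in>V. \<forall>v2\<in>V. v1 \<noteq> v2 \<longrightarrow>
        induced_connected Eg
          {u \<in> V. As ! \<phi> u \<subseteq> dual_closure E (partial_transversal E As) (As ! \<phi> v1 \<union> As ! \<phi> v2)})"

definition presenting_graph :: "'a set \<Rightarrow> 'a set list \<Rightarrow> 'a \<Rightarrow> 'v set \<Rightarrow> 'v set set \<Rightarrow> bool" where
  "presenting_graph E As e V Eg \<longleftrightarrow> simple_graph V Eg \<and> (\<exists>\<phi>. presenting_map E As e V Eg \<phi>)"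

definition minimal_presenting_graph :: "'a set \<Rightarrow> 'a set list \<Rightarrow> 'a \<Rightarrow> 'v set \<Rightarrow> 'v set set \<Rightarrow> bool" where
  "minimal_presenting_graph E As e V Eg \<longleftrightarrow> presenting_graph E As e V Eg \<and>
     (\<forall>ed\<in>Eg. \<not> presenting_graph E As e V (Eg - {ed}))"

end

theory Submission
  imports Defs
begin


lemma hall_gen:
  fixes X :: "'a set" and N :: "'a \<Rightarrow> 'b set"
  assumes "finite X" "finite (\<Union>(N ` X))" "\<forall>Y\<subseteq>X. card Y \<le> card (\<Union>(N ` Y))"
  shows "\<exists>f. inj_on f X \<and> (\<forall>x\<in>X. f x \<in> N x)"
  using assms
proof (induction "card X" arbitrary: X N rule: less_induct)
  case less
  show ?case
  proof (cases "X = {}")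
    case True then show ?thesis by auto
  next
    case Xne: False
    show ?thesis
    proof (cases "\<exists>Y. Y \<subseteq> X \<and> Y \<noteq> {} \<and> Y \<noteq> X \<and> card (\<Union>(N ` Y)) = card Y")
      case True
      then obtain Y where Y: "Y \<subseteq> X" "Y \<noteq> {}" "Y \<noteq> X" "card (\<Union>(N ` Y)) = card Y" by blast
      have fY: "finite Y" using Y(1) less.prems(1) finite_subset by blast
      have cY: "card Y < card X" using Y less.prems(1) by (meson psubsetI psubset_card_mono)
      have fNY: "finite (\<Union>(N ` Y))" using less.prems(2) Y(1) by (meson UN_mono finite_subset order_refl)
      obtain f1 where f1: "inj_on f1 Y" "\<forall>x\<in>Y. f1 x \<in> N x"
      proof -
        have "\<forall>Y'\<subseteq>Y. card Y' \<le> card (\<Union>(N ` Y'))" using less.prems(3) Y(1) by blast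
        then show ?thesis using less.hyps[OF cY fY fNY] that by blast
      qed
      define N2 where "N2 = (\<lambda>x. N x - \<Union>(N ` Y))"
      have "card Y > 0" using fY Y(2) by auto
      then have cXY: "card (X - Y) < card X" using card_Diff_subset[OF fY Y(1)] cY by linarith
      have fXY: "finite (X - Y)" using less.prems(1) by blast
      have fN2: "finite (\<Union>(N2 ` (X - Y)))" using less.prems(2) unfolding N2_def
        by (rule finite_subset[rotated]) auto
      have cond: "\<forall>Y'\<subseteq>X - Y. card Y' \<le> card (\<Union>(N2 ` Y'))"
      proof (intro allI impI)
        fix Y' assume Y': "Y' \<subseteq> X - Y"
        have fY': "finite Y'" using Y' fXY finite_subset by blast
        have eq: "\<Union>(N2 ` Y') = \<Union>(N ` (Y' \<union> Y)) - \<Union>(N ` Y)" unfolding N2_def by auto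
        have fU: "finite (\<Union>(N ` (Y' \<union> Y)))"
          by (rule finite_subset[OF _ less.prems(2)]) (use Y Y' in auto)
        have "card (\<Union>(N2 ` Y')) = card (\<Union>(N ` (Y' \<union> Y))) - card (\<Union>(N ` Y))"
          unfolding eq by (rule card_Diff_subset) (use fNY in auto)
        moreover have "card (Y' \<union> Y) \<le> card (\<Union>(N ` (Y' \<union> Y)))"
        proof -
          have "Y' \<union> Y \<subseteq> X" using Y Y' by blast
          then show ?thesis using less.prems(3) by blast
        qed
        moreover have "card (Y' \<union> Y) = card Y' + card Y"
          using Y' fY fY' by (subst card_Un_disjoint) auto
        ultimately show "card Y' \<le> card (\<Union>(N2 ` Y'))" using Y(4) by linarith
      qed
      obtain f2 where f2: "inj_on f2 (X - Y)" "\<forall>x\<in>X - Y. f2 x \<in> N2 x"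
        using less.hyps[OF cXY fXY fN2 cond] by blast
      define f where "f = (\<lambda>x. if x \<in> Y then f1 x else f2 x)"
      have "inj_on f X"
        unfolding inj_on_def f_def
      proof (intro ballI impI)
        fix x y assume xy: "x \<in> X" "y \<in> X" "(if x \<in> Y then f1 x else f2 x) = (if y \<in> Y then f1 y else f2 y)"
        show "x = y"
        proof (cases "x \<in> Y"; cases "y \<in> Y")
          assume "x \<in> Y" "y \<in> Y" then show ?thesis using xy f1(1) by (auto simp: inj_on_def)
        next
          assume "x \<notin> Y" "y \<notin> Y" then show ?thesis using xy f2(1) by (auto simp: inj_on_def)
        next
          assume a: "x \<in> Y" "y \<notin> Y"
          then have "f1 x \<in> \<Union>(N ` Y)" "f2 y \<notin> \<Union>(N ` Y)" using f1(2) f2(2) xy(2) unfolding N2_def by auto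
          then show ?thesis using xy a by auto
        next
          assume a: "x \<notin> Y" "y \<in> Y"
          then have "f1 y \<in> \<Union>(N ` Y)" "f2 x \<notin> \<Union>(N ` Y)" using f1(2) f2(2) xy(1) unfolding N2_def by auto
          then show ?thesis using xy a by auto
        qed
      qed
      moreover have "\<forall>x\<in>X. f x \<in> N x" using f1(2) f2(2) unfolding f_def N2_def by auto
      ultimately show ?thesis by blast
    next
      case False
      have strict: "card Y < card (\<Union>(N ` Y))" if "Y \<subseteq> X" "Y \<noteq> {}" "Y \<noteq> X" for Y
      proof -
        have "card Y \<le> card (\<Union>(N ` Y))" using less.prems(3) that(1) by blast
        moreover have "card (\<Union>(N ` Y)) \<noteq> card Y" using False that by blast
        ultimately show ?thesis by linarith
      qed
      obtain x where x: "x \<in> X" using Xne by blast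
      have "card {x} \<le> card (\<Union>(N ` {x}))" using less.prems(3) x by blast
      then have "card {x} \<le> card (N x)" by simp
      then have "N x \<noteq> {}" by auto
      then obtain i where i: "i \<in> N x" by blast
      define N2 where "N2 = (\<lambda>y. N y - {i})"
      have cX: "card (X - {x}) < card X" using x less.prems(1) by (meson card_Diff1_less)
      have fX: "finite (X - {x})" using less.prems(1) by blast
      have fN2: "finite (\<Union>(N2 ` (X - {x})))" using less.prems(2) unfolding N2_def
        by (rule finite_subset[rotated]) auto
      have cond: "\<forall>Y'\<subseteq>X - {x}. card Y' \<le> card (\<Union>(N2 ` Y'))"
      proof (intro allI impI)
        fix Y' assume Y': "Y' \<subseteq> X - {x}"
        show "card Y' \<le> card (\<Union>(N2 ` Y'))"
        proof (cases "Y' = {}")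
          case True then show ?thesis by simp
        next
          case False
          have lt: "card Y' < card (\<Union>(N ` Y'))" using strict[of Y'] Y' False x by auto
          have eq: "\<Union>(N2 ` Y') = \<Union>(N ` Y') - {i}" unfolding N2_def by auto
          have fU: "finite (\<Union>(N ` Y'))"
            by (rule finite_subset[OF _ less.prems(2)]) (use Y' in auto)
          have "card (\<Union>(N ` Y')) - 1 \<le> card (\<Union>(N ` Y') - {i})"
            by (metis card_Diff_singleton_if diff_le_self order_refl)
          then show ?thesis unfolding eq using lt by linarith
        qed
      qed
      obtain f2 where f2: "inj_on f2 (X - {x})" "\<forall>y\<in>X - {x}. f2 y \<in> N2 y"
        using less.hyps[OF cX fX fN2 cond] by blast
      define f where "f = f2(x := i)"
      have "inj_on f X" unfolding inj_on_def
      proof (intro ballI impI)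
        fix y z assume yz: "y \<in> X" "z \<in> X" "f y = f z"
        show "y = z"
        proof (cases "y = x"; cases "z = x")
          assume "y \<noteq> x" "z \<noteq> x" then show ?thesis using yz f2(1) unfolding f_def inj_on_def by auto
        next
          assume a: "y = x" "z \<noteq> x"
          then have "f2 z \<noteq> i" using f2(2) yz(2) unfolding N2_def by auto
          then show ?thesis using a yz unfolding f_def by auto
        next
          assume a: "y \<noteq> x" "z = x"
          then have "f2 y \<noteq> i" using f2(2) yz(1) unfolding N2_def by auto
          then show ?thesis using a yz unfolding f_def by auto
        qed simp
      qed
      moreover have "\<forall>y\<in>X. f y \<in> N y" using f2(2) i unfolding f_def N2_def by auto
      ultimately show ?thesis by blast
    qed
  qed
qed



definition nbr :: "'a set list \<Rightarrow> 'a set \<Rightarrow> nat set" where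
  "nbr Bs Z = {i. i < length Bs \<and> Bs ! i \<inter> Z \<noteq> {}}"

lemma nbr_finite[simp]: "finite (nbr Bs Z)"
  unfolding nbr_def by (rule finite_subset[of _ "{..<length Bs}"]) auto

lemma nbr_mono: "Y \<subseteq> Z \<Longrightarrow> nbr Bs Y \<subseteq> nbr Bs Z"
  unfolding nbr_def by auto

lemma nbr_Un: "nbr Bs (Y \<union> Z) = nbr Bs Y \<union> nbr Bs Z"
  unfolding nbr_def by auto

lemma nbr_Int: "nbr Bs (Y \<inter> Z) \<subseteq> nbr Bs Y \<inter> nbr Bs Z"
  unfolding nbr_def by auto

lemma pt_subset: "partial_transversal E Bs X \<Longrightarrow> Y \<subseteq> X \<Longrightarrow> partial_transversal E Bs Y"
  unfolding partial_transversal_def using inj_on_subset by blast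

lemma pt_empty: "partial_transversal E Bs {}"
  unfolding partial_transversal_def by auto

lemma pt_card:
  assumes "finite X" "partial_transversal E Bs X"
  shows "card X \<le> length Bs"
proof -
  obtain f where f: "inj_on f X" "\<forall>x\<in>X. f x < length Bs \<and> x \<in> Bs ! f x"
    using assms(2) unfolding partial_transversal_def by blast
  have "card X = card (f ` X)" using f(1) by (simp add: card_image)
  also have "\<dots> \<le> card {..<length Bs}" by (rule card_mono) (use f(2) in auto)
  finally show ?thesis by simp
qed

lemma pt_triv:
  assumes "partial_transversal E Bs X" "Y \<subseteq> X"
  shows "card Y \<le> card (nbr Bs Y)"
proof -
  obtain f where f: "inj_on f X" "\<forall>x\<in>X. f x < length Bs \<and> x \<in> Bs ! f x"
    using assms(1) unfolding partial_transversal_def by blast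
  have "inj_on f Y" using f(1) assms(2) inj_on_subset by blast
  moreover have "f ` Y \<subseteq> nbr Bs Y" using f(2) assms(2) unfolding nbr_def by auto
  ultimately show ?thesis using card_inj_on_le nbr_finite by blast
qed

lemma pt_hall:
  assumes "finite X" "X \<subseteq> E" "\<not> partial_transversal E Bs X"
  shows "\<exists>Z\<subseteq>X. card (nbr Bs Z) < card Z"
proof (rule ccontr)
  assume nh: "\<not> (\<exists>Z\<subseteq>X. card (nbr Bs Z) < card Z)"
  define N where "N = (\<lambda>x. {i. i < length Bs \<and> x \<in> Bs ! i})"
  have eq: "\<Union>(N ` Z) = nbr Bs Z" for Z unfolding N_def nbr_def by auto
  have "\<forall>Y\<subseteq>X. card Y \<le> card (\<Union>(N ` Y))" using nh unfolding eq by (meson not_le)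
  moreover have "finite (\<Union>(N ` X))" unfolding eq by simp
  ultimately obtain f where "inj_on f X" "\<forall>x\<in>X. f x \<in> N x" using hall_gen[OF assms(1)] by blast
  then have "partial_transversal E Bs X" using assms(2) unfolding partial_transversal_def N_def by auto
  then show False using assms(3) by blast
qed

lemma pt_augment:
  assumes fin: "finite E" and I: "partial_transversal E Bs I" and T: "partial_transversal E Bs T"
    and lt: "card I < card T"
  shows "\<exists>x\<in>T - I. partial_transversal E Bs (insert x I)"
proof (rule ccontr)
  assume na: "\<not> ?thesis"
  have IE: "I \<subseteq> E" and TE: "T \<subseteq> E" using I T unfolding partial_transversal_def by auto
  have fI: "finite I" and fT: "finite T" using IE TE fin finite_subset by auto
  define tight where "tight = (\<lambda>P. P \<subseteq> I \<and> card (nbr Bs P) = card P)"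
  have tight_un: "tight (P \<union> Q)" if "tight P" "tight Q" for P Q
  proof -
    have fP: "finite P" "finite Q" using that fI finite_subset unfolding tight_def by auto
    have "card (nbr Bs (P \<union> Q)) + card (nbr Bs P \<inter> nbr Bs Q) = card (nbr Bs P) + card (nbr Bs Q)"
      unfolding nbr_Un using card_Un_Int[of "nbr Bs P" "nbr Bs Q"] by simp
    moreover have "card (nbr Bs (P \<inter> Q)) \<le> card (nbr Bs P \<inter> nbr Bs Q)"
      by (rule card_mono) (use nbr_Int[of Bs P Q] in auto)
    moreover have "card (P \<inter> Q) \<le> card (nbr Bs (P \<inter> Q))"
      using pt_triv[OF I] that unfolding tight_def by blast
    moreover have "card (P \<union> Q) + card (P \<inter> Q) = card P + card Q" using card_Un_Int[OF fP] by simp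
    moreover have "card (P \<union> Q) \<le> card (nbr Bs (P \<union> Q))"
      using pt_triv[OF I] that unfolding tight_def by blast
    moreover have "card (nbr Bs P) = card P" "card (nbr Bs Q) = card Q" using that unfolding tight_def by auto
    ultimately have "card (nbr Bs (P \<union> Q)) = card (P \<union> Q)" by linarith
    moreover have "P \<union> Q \<subseteq> I" using that unfolding tight_def by auto
    ultimately show ?thesis unfolding tight_def by simp
  qed
  define TS where "TS = {P. tight P}"
  have fTS: "finite TS"
  proof -
    have "TS \<subseteq> Pow I" unfolding TS_def tight_def by auto
    then show ?thesis using fI finite_subset by blast
  qed
  have "{} \<in> TS" unfolding TS_def tight_def nbr_def by auto
  then have "Max (card ` TS) \<in> card ` TS" using fTS by (intro Max_in) auto
  then obtain Q where Q0: "Q \<in> TS" "card Q = Max (card ` TS)" by auto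
  then have Q: "Q \<in> TS" "\<forall>P\<in>TS. card P \<le> card Q" using fTS by auto
  have Qt: "tight Q" using Q(1) unfolding TS_def by simp
  have fQ: "finite Q" using Qt fI finite_subset unfolding tight_def by auto
  have sub: "nbr Bs {x} \<subseteq> nbr Bs Q" if x: "x \<in> T - I" for x
  proof -
    have h1: "\<not> partial_transversal E Bs (insert x I)" using na x by blast
    have h2: "finite (insert x I)" using fI by simp
    have h3: "insert x I \<subseteq> E" using x TE IE by auto
    obtain Z where Z: "Z \<subseteq> insert x I" "card (nbr Bs Z) < card Z" using pt_hall[OF h2 h3 h1] by blast
    have "\<not> Z \<subseteq> I"
    proof
      assume "Z \<subseteq> I"
      then have "card Z \<le> card (nbr Bs Z)" using pt_triv[OF I] by blast
      then show False using Z(2) by linarith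
    qed
    then have xZ: "x \<in> Z" using Z(1) by blast
    define Y where "Y = Z - {x}"
    have YI: "Y \<subseteq> I" using Z(1) unfolding Y_def by blast
    have fZ: "finite Z" using Z(1) fI finite_subset by blast
    have cY: "card Y = card Z - 1" unfolding Y_def using xZ fZ by simp
    have "card Y \<le> card (nbr Bs Y)" using pt_triv[OF I YI] .
    moreover have "nbr Bs Y \<subseteq> nbr Bs Z" unfolding Y_def by (rule nbr_mono) auto
    moreover have "card (nbr Bs Y) \<le> card (nbr Bs Z)" using \<open>nbr Bs Y \<subseteq> nbr Bs Z\<close> by (simp add: card_mono)
    moreover have "card Z > 0" using xZ fZ card_gt_0_iff by blast
    ultimately have tY: "card (nbr Bs Y) = card Y" and c2: "card (nbr Bs Y) = card (nbr Bs Z)"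
      using Z(2) cY by linarith+
    have eqN: "nbr Bs Y = nbr Bs Z" using card_seteq[OF nbr_finite \<open>nbr Bs Y \<subseteq> nbr Bs Z\<close>] c2 by simp
    have "tight Y" using YI tY unfolding tight_def by simp
    then have "tight (Q \<union> Y)" using Qt tight_un by blast
    then have "card (Q \<union> Y) \<le> card Q" using Q(2) unfolding TS_def by blast
    moreover have "finite (Q \<union> Y)" using fQ YI fI finite_subset by blast
    ultimately have "Q \<union> Y = Q" using card_seteq[of "Q \<union> Y" Q] by blast
    then have "nbr Bs Y \<subseteq> nbr Bs Q" using nbr_mono[of Y Q Bs] by blast
    moreover have "nbr Bs {x} \<subseteq> nbr Bs Z" using xZ nbr_mono[of "{x}" Z Bs] by blast
    ultimately show ?thesis using eqN by blast
  qed
  define T1 where "T1 = (T \<inter> Q) \<union> (T - I)"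
  have "nbr Bs T1 \<subseteq> nbr Bs Q"
  proof
    fix i assume "i \<in> nbr Bs T1"
    then obtain x where x: "x \<in> T1" "i < length Bs" "x \<in> Bs ! i" unfolding nbr_def by auto
    show "i \<in> nbr Bs Q"
    proof (cases "x \<in> Q")
      case True then show ?thesis using x unfolding nbr_def by auto
    next
      case False
      then have "x \<in> T - I" using x(1) unfolding T1_def by auto
      moreover have "i \<in> nbr Bs {x}" using x unfolding nbr_def by auto
      ultimately show ?thesis using sub by blast
    qed
  qed
  then have "card (nbr Bs T1) \<le> card (nbr Bs Q)" by (simp add: card_mono)
  then have "card (nbr Bs T1) \<le> card Q" using Qt unfolding tight_def by simp
  moreover have "card T1 \<le> card (nbr Bs T1)"
  proof -
    have "T1 \<subseteq> T" unfolding T1_def by blast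
    then show ?thesis using pt_triv[OF T] by blast
  qed
  moreover have "card T \<le> card T1 + card (T \<inter> (I - Q))"
  proof -
    have eqT: "T = T1 \<union> (T \<inter> (I - Q))" unfolding T1_def by blast
    show ?thesis using card_Un_le[of T1 "T \<inter> (I - Q)"] eqT by simp
  qed
  moreover have "card (T \<inter> (I - Q)) \<le> card (I - Q)" by (rule card_mono) (use fI in auto)
  moreover have "card (I - Q) = card I - card Q" using Qt fQ card_Diff_subset unfolding tight_def by blast
  moreover have "card Q \<le> card I" using Qt fI card_mono unfolding tight_def by blast
  ultimately show False using lt by linarith
qed



lemma basis_card:
  assumes fin: "finite E" and T: "partial_transversal E As T" "card T = length As"
    and B: "mbasis E (partial_transversal E As) B"
  shows "card B = length As"
proof -
  have BP: "partial_transversal E As B" "B \<subseteq> E" using B unfolding mbasis_def by auto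
  have fB: "finite B" using BP(2) fin finite_subset by blast
  have le: "card B \<le> length As" using pt_card[OF fB BP(1)] .
  show ?thesis
  proof (rule ccontr)
    assume "card B \<noteq> length As"
    then have "card B < card T" using le T(2) by linarith
    then obtain x where x: "x \<in> T - B" "partial_transversal E As (insert x B)"
      using pt_augment[OF fin BP(1) T(1)] by blast
    have "insert x B \<subseteq> E" using x(2) unfolding partial_transversal_def by blast
    then have "insert x B = B" using B x(2) unfolding mbasis_def by blast
    then show False using x(1) by blast
  qed
qed

lemma card_basis:
  assumes fin: "finite E" and B: "partial_transversal E As B" "card B = length As"
  shows "mbasis E (partial_transversal E As) B"
  unfolding mbasis_def
proof (intro conjI allI impI)
  show "B \<subseteq> E" using B(1) unfolding partial_transversal_def by blast
  show "partial_transversal E As B" by (rule B(1))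
  fix I assume I: "I \<subseteq> E \<and> partial_transversal E As I \<and> B \<subseteq> I"
  have fI: "finite I" using I fin finite_subset by blast
  have "card I \<le> length As" using pt_card[OF fI] I by blast
  then show "I = B" using card_seteq[OF fI] I B(2) by metis
qed

lemma lemD:
  assumes fin: "finite E" and T: "partial_transversal E As T" "card T = length As"
    and ZE: "Z \<subseteq> E" and Zd: "\<not> partial_transversal E As Z"
    and Zmin: "\<forall>Z'. Z' \<subset> Z \<longrightarrow> partial_transversal E As Z'"
    and zZ: "z \<in> Z" and XE: "X \<subseteq> E" and ZX: "Z \<inter> X = {}"
  shows "z \<notin> dual_closure E (partial_transversal E As) X"
proof
  let ?P = "partial_transversal E As"
  let ?D = "dual_indep E ?P"
  let ?r = "length As"
  assume zcl: "z \<in> dual_closure E ?P X"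
  define JS where "JS = {J. J \<subseteq> X \<and> ?D J}"
  have fX: "finite X" using XE fin finite_subset by blast
  have fJS: "finite JS" unfolding JS_def by (rule finite_subset[of _ "Pow X"]) (use fX in auto)
  have Tb: "mbasis E ?P T" using card_basis[OF fin T] .
  have "{} \<in> JS" unfolding JS_def dual_indep_def using Tb by auto
  then have "Max (card ` JS) \<in> card ` JS" using fJS by (intro Max_in) auto
  then obtain J where J: "J \<in> JS" "card J = Max (card ` JS)" by auto
  have mX: "mrank ?D X = card J" unfolding mrank_def J(2) JS_def by simp
  have JX: "J \<subseteq> X" "?D J" using J(1) unfolding JS_def by auto
  obtain B where B: "mbasis E ?P B" "B \<inter> J = {}" using JX(2) unfolding dual_indep_def by blast
  have cB: "card B = ?r" using basis_card[OF fin T B(1)] .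
  have BP: "?P B" "B \<subseteq> E" using B(1) unfolding mbasis_def by auto
  have zE: "z \<in> E" using zZ ZE by blast
  have zX: "z \<notin> X" using zZ ZX by blast
  have "\<exists>B'. mbasis E ?P B' \<and> B' \<inter> insert z J = {}"
  proof (cases "z \<in> B")
    case False then show ?thesis using B by blast
  next
    case zB: True
    define U where "U = (Z - {z}) \<union> (B - {z})"
    define PS where "PS = {P. Z - {z} \<subseteq> P \<and> P \<subseteq> U \<and> ?P P}"
    have fU: "finite U" unfolding U_def using ZE BP(2) fin finite_subset by blast
    have fPS: "finite PS" unfolding PS_def by (rule finite_subset[of _ "Pow U"]) (use fU in auto)
    have "Z - {z} \<in> PS" unfolding PS_def U_def using Zmin zZ by auto
    then have "Max (card ` PS) \<in> card ` PS" using fPS by (intro Max_in) auto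
    then obtain P where P: "P \<in> PS" "card P = Max (card ` PS)" by auto
    have Pmax: "card P' \<le> card P" if "P' \<in> PS" for P' using P(2) fPS that by simp
    have PP: "Z - {z} \<subseteq> P" "P \<subseteq> U" "?P P" using P(1) unfolding PS_def by auto
    have fP: "finite P" using PP(2) fU finite_subset by blast
    have ext: "False" if y: "y \<in> U - P" "?P (insert y P)" for y
    proof -
      have "insert y P \<in> PS" using y PP unfolding PS_def by auto
      then have "card (insert y P) \<le> card P" by (rule Pmax)
      then show False using y fP by simp
    qed
    have "\<not> card P < ?r - 1"
    proof
      assume lt: "card P < ?r - 1"
      have Bz: "?P (B - {z})" using pt_subset[OF BP(1)] by blast
      have "card (B - {z}) = ?r - 1" using cB zB by simp
      then obtain y where y: "y \<in> (B - {z}) - P" "?P (insert y P)"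
        using pt_augment[OF fin PP(3) Bz] lt by auto
      have "y \<in> U - P" using y(1) unfolding U_def by blast
      then show False using ext y(2) by blast
    qed
    moreover have "\<not> card P < ?r"
    proof
      assume lt: "card P < ?r"
      then obtain y where y: "y \<in> B - P" "?P (insert y P)"
        using pt_augment[OF fin PP(3) BP(1)] cB by auto
      show False
      proof (cases "y = z")
        case True
        have "Z \<subseteq> insert y P" using PP(1) True zZ by blast
        then have "?P Z" using pt_subset[OF y(2)] by blast
        then show False using Zd by blast
      next
        case False
        then have "y \<in> U - P" using y(1) unfolding U_def by blast
        then show False using ext y(2) by blast
      qed
    qed
    ultimately have cP: "card P = ?r" using pt_card[OF fP PP(3)] by linarith
    have "mbasis E ?P P" using card_basis[OF fin PP(3) cP] .
    moreover have "P \<inter> insert z J = {}"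
    proof -
      have "z \<notin> U" unfolding U_def by blast
      moreover have "U \<inter> J = {}" unfolding U_def using ZX JX(1) B(2) by blast
      ultimately show ?thesis using PP(2) by blast
    qed
    ultimately show ?thesis by blast
  qed
  then have Dz: "?D (insert z J)" unfolding dual_indep_def using zE JX XE by blast
  define JS2 where "JS2 = {J. J \<subseteq> insert z X \<and> ?D J}"
  have fJS2: "finite JS2" unfolding JS2_def by (rule finite_subset[of _ "Pow (insert z X)"]) (use fX in auto)
  have "insert z J \<in> JS2" unfolding JS2_def using Dz JX by blast
  then have "card (insert z J) \<le> Max (card ` JS2)" using fJS2 by simp
  then have "card (insert z J) \<le> mrank ?D (insert z X)" unfolding mrank_def JS2_def by simp
  moreover have "card (insert z J) = card J + 1"
  proof -
    have "finite J" using JX(1) fX finite_subset by blast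
    moreover have "z \<notin> J" using JX(1) zX by blast
    ultimately show ?thesis by simp
  qed
  moreover have "mrank ?D (insert z X) = mrank ?D X"
    using zcl unfolding dual_closure_def mclosure_def by simp
  ultimately show False using mX by linarith
qed



definition grel :: "'v set set \<Rightarrow> 'v set \<Rightarrow> ('v \<times> 'v) set" where
  "grel Eg S = {(a, b). a \<in> S \<and> b \<in> S \<and> {a, b} \<in> Eg}"

lemma induced_connected_grel: "induced_connected Eg S \<longleftrightarrow> (\<forall>x\<in>S. \<forall>y\<in>S. (x, y) \<in> (grel Eg S)\<^sup>*)"
  unfolding induced_connected_def grel_def by simp

lemma grel_mono: "S \<subseteq> S' \<Longrightarrow> (grel Eg S)\<^sup>* \<subseteq> (grel Eg S')\<^sup>*"
  unfolding grel_def by (rule rtrancl_mono) auto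

lemma crossing_edge:
  assumes "(r0, w0) \<in> (grel Eg V)\<^sup>*" "r0 \<in> R" "w0 \<notin> R"
  shows "\<exists>w r. w \<in> V \<and> w \<notin> R \<and> r \<in> R \<and> {w, r} \<in> Eg"
  using assms
proof (induction rule: rtrancl_induct)
  case base then show ?case by simp
next
  case (step y z)
  show ?case
  proof (cases "y \<in> R")
    case True
    then show ?thesis using step(2,5) unfolding grel_def
      by (intro exI[of _ z] exI[of _ y]) (auto simp: insert_commute)
  next
    case False then show ?thesis using step by blast
  qed
qed

definition gpath :: "'v set set \<Rightarrow> 'v list \<Rightarrow> bool" where
  "gpath Eg p \<longleftrightarrow> (\<forall>i. Suc i < length p \<longrightarrow> {p ! i, p ! Suc i} \<in> Eg)"

lemma simple_path:
  assumes "(x, y) \<in> (grel Eg S)\<^sup>*" "x \<in> S"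
  shows "\<exists>p. p \<noteq> [] \<and> hd p = x \<and> last p = y \<and> distinct p \<and> set p \<subseteq> S \<and> gpath Eg p"
  using assms(1)
proof (induction rule: rtrancl_induct)
  case base
  then show ?case using assms(2) by (intro exI[of _ "[x]"]) (auto simp: gpath_def)
next
  case (step y z)
  then obtain p where p: "p \<noteq> []" "hd p = x" "last p = y" "distinct p" "set p \<subseteq> S" "gpath Eg p" by blast
  have yz: "z \<in> S" "{y, z} \<in> Eg" using step(2) unfolding grel_def by auto
  show ?case
  proof (cases "z \<in> set p")
    case True
    then obtain n where n: "n < length p" "p ! n = z" by (meson in_set_conv_nth)
    define p' where "p' = take (Suc n) p"
    have "p' \<noteq> []" unfolding p'_def using p(1) by simp
    moreover have "hd p' = x" unfolding p'_def using p(1,2) by (simp add: hd_take)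
    moreover have "last p' = z" unfolding p'_def using n by (simp add: take_Suc_conv_app_nth)
    moreover have "distinct p'" unfolding p'_def using p(4) by simp
    moreover have "set p' \<subseteq> S" unfolding p'_def using p(5) set_take_subset by fastforce
    moreover have "gpath Eg p'" using p(6) n unfolding gpath_def p'_def by auto
    ultimately show ?thesis by blast
  next
    case False
    define p' where "p' = p @ [z]"
    have "gpath Eg p'" unfolding gpath_def
    proof (intro allI impI)
      fix i assume i: "Suc i < length p'"
      show "{p' ! i, p' ! Suc i} \<in> Eg"
      proof (cases "Suc i < length p")
        case True
        then show ?thesis using p(6) unfolding gpath_def p'_def by (simp add: nth_append)
      next
        case False
        then have "Suc i = length p" using i unfolding p'_def by simp
        then have ii: "i = length p - 1" by simp
        have "p' ! i = y" "p' ! Suc i = z" unfolding p'_def using p(1,3) \<open>Suc i = length p\<close>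
          by (auto simp: nth_append last_conv_nth ii)
        then show ?thesis using yz(2) by simp
      qed
    qed
    then show ?thesis using p False yz(1) unfolding p'_def by (intro exI[of _ "p @ [z]"]) auto
  qed
qed

lemma make_cycle:
  assumes RV: "R \<subseteq> V" and Rc: "induced_connected Eg R" and w: "w \<in> V" "w \<notin> R"
    and r: "r1 \<in> R" "r2 \<in> R" "r1 \<noteq> r2" and e1: "{w, r1} \<in> Eg" and e2: "{w, r2} \<in> Eg"
  shows "has_cycle V Eg"
proof -
  have "(r1, r2) \<in> (grel Eg R)\<^sup>*" using Rc r unfolding induced_connected_grel by blast
  then obtain p where p: "p \<noteq> []" "hd p = r1" "last p = r2" "distinct p" "set p \<subseteq> R" "gpath Eg p"
    using simple_path[OF _ r(1)] by blast
  have lp: "length p \<ge> 2"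
  proof (rule ccontr)
    assume "\<not> length p \<ge> 2"
    then have "length p = 1" using p(1) by (cases p) (auto simp: Suc_le_eq)
    then have "hd p = last p" by (cases p) auto
    then show False using p r by simp
  qed
  define cs where "cs = w # p"
  have "3 \<le> length cs" unfolding cs_def using lp by simp
  moreover have "distinct cs" unfolding cs_def using p(4,5) w(2) by auto
  moreover have "set cs \<subseteq> V" unfolding cs_def using p(5) RV w(1) by auto
  moreover have "\<forall>i<length cs. {cs ! i, cs ! ((i + 1) mod length cs)} \<in> Eg"
  proof (intro allI impI)
    fix i assume i: "i < length cs"
    show "{cs ! i, cs ! ((i + 1) mod length cs)} \<in> Eg"
    proof (cases i)
      case 0
      then have "cs ! i = w" "cs ! ((i + 1) mod length cs) = r1"
        unfolding cs_def using lp p(1,2) by (auto simp: hd_conv_nth)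
      then show ?thesis using e1 by simp
    next
      case (Suc j)
      show ?thesis
      proof (cases "Suc j < length p")
        case True
        then have "cs ! i = p ! j" "cs ! ((i + 1) mod length cs) = p ! Suc j"
          unfolding cs_def using Suc by auto
        then show ?thesis using p(6) True unfolding gpath_def by simp
      next
        case False
        then have j: "j = length p - 1" "i + 1 = length cs" using i Suc unfolding cs_def by auto
        then have "cs ! i = r2" "cs ! ((i + 1) mod length cs) = w"
          unfolding cs_def using Suc p(1,3) by (auto simp: last_conv_nth)
        then show ?thesis using e2 by (simp add: insert_commute)
      qed
    qed
  qed
  ultimately show ?thesis unfolding has_cycle_def by (intro exI[of _ cs]) simp
qed

lemma grow_connected:
  assumes Rc: "induced_connected Eg R" and r: "r \<in> R" and ed: "{w, r} \<in> Eg"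
  shows "induced_connected Eg (insert w R)"
  unfolding induced_connected_grel
proof (intro ballI)
  fix x y assume xy: "x \<in> insert w R" "y \<in> insert w R"
  have mono: "(grel Eg R)\<^sup>* \<subseteq> (grel Eg (insert w R))\<^sup>*" by (rule grel_mono) auto
  have wr: "(w, r) \<in> (grel Eg (insert w R))\<^sup>*" using ed r unfolding grel_def by auto
  have rw: "(r, w) \<in> (grel Eg (insert w R))\<^sup>*" using ed r unfolding grel_def by (auto simp: insert_commute)
  have RR: "(a, b) \<in> (grel Eg (insert w R))\<^sup>*" if "a \<in> R" "b \<in> R" for a b
    using Rc that mono unfolding induced_connected_grel by blast
  show "(x, y) \<in> (grel Eg (insert w R))\<^sup>*"
  proof (cases "x = w"; cases "y = w")
    assume "x = w" "y = w" then show ?thesis by simp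
  next
    assume a: "x = w" "y \<noteq> w"
    then have "y \<in> R" using xy by auto
    then show ?thesis using a wr RR[OF r] by (meson rtrancl_trans)
  next
    assume a: "x \<noteq> w" "y = w"
    then have "x \<in> R" using xy by auto
    then show ?thesis using a rw RR[OF _ r] by (meson rtrancl_trans)
  next
    assume a: "x \<noteq> w" "y \<noteq> w"
    then show ?thesis using xy RR by auto
  qed
qed

lemma tree_count:
  assumes sg: "simple_graph V Eg" and nc: "\<not> has_cycle V Eg" and Vc: "induced_connected Eg V"
    and RV: "R \<subseteq> V" and Rne: "R \<noteq> {}" and Rc: "induced_connected Eg R"
  shows "card {ed\<in>Eg. \<not> ed \<subseteq> R} \<le> card (V - R)"
  using RV Rne Rc
proof (induction "card (V - R)" arbitrary: R rule: less_induct)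
  case less
  have fV: "finite V" using sg unfolding simple_graph_def by blast
  have EgV: "\<forall>ed\<in>Eg. ed \<subseteq> V" using sg unfolding simple_graph_def by fastforce
  have fEg: "finite Eg" by (rule finite_subset[of Eg "Pow V"]) (use EgV fV in auto)
  show ?case
  proof (cases "V - R = {}")
    case True
    then have "V \<subseteq> R" by blast
    then have h: "{ed\<in>Eg. \<not> ed \<subseteq> R} = {}" using EgV by auto
    show ?thesis unfolding h by simp
  next
    case False
    then obtain w0 where w0: "w0 \<in> V" "w0 \<notin> R" by blast
    obtain r0 where r0: "r0 \<in> R" using less.prems(2) by blast
    have "(r0, w0) \<in> (grel Eg V)\<^sup>*" using Vc r0 w0 less.prems(1) unfolding induced_connected_grel by blast
    then obtain w r where wr: "w \<in> V" "w \<notin> R" "r \<in> R" "{w, r} \<in> Eg"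
      using crossing_edge[OF _ r0 w0(2)] by blast
    define R' where "R' = insert w R"
    have R'c: "induced_connected Eg R'" unfolding R'_def by (rule grow_connected[OF less.prems(3) wr(3,4)])
    have eqd: "V - R' = (V - R) - {w}" unfolding R'_def by blast
    have wVR: "w \<in> V - R" using wr by blast
    have fVR: "finite (V - R)" using fV by blast
    have cR': "card (V - R') = card (V - R) - 1" unfolding eqd using wVR fVR by simp
    have "card (V - R) > 0" using wVR fVR card_gt_0_iff by blast
    then have lt: "card (V - R') < card (V - R)" using cR' by linarith
    have R'V: "R' \<subseteq> V" "R' \<noteq> {}" using less.prems(1) wr(1) unfolding R'_def by auto
    have IH: "card {ed\<in>Eg. \<not> ed \<subseteq> R'} \<le> card (V - R')"
      by (rule less.hyps[OF lt R'V R'c])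
    have sub: "{ed\<in>Eg. \<not> ed \<subseteq> R} \<subseteq> insert {w, r} {ed\<in>Eg. \<not> ed \<subseteq> R'}"
    proof
      fix ed assume ed: "ed \<in> {ed\<in>Eg. \<not> ed \<subseteq> R}"
      show "ed \<in> insert {w, r} {ed\<in>Eg. \<not> ed \<subseteq> R'}"
      proof (cases "ed \<subseteq> R'")
        case False then show ?thesis using ed by blast
      next
        case True
        have edE: "ed \<in> Eg" and edR: "\<not> ed \<subseteq> R" using ed by auto
        obtain a b where ab: "ed = {a, b}" "a \<noteq> b" using edE sg unfolding simple_graph_def by blast
        have "w \<in> ed"
        proof (rule ccontr)
          assume "w \<notin> ed"
          then have "ed \<subseteq> R" using True unfolding R'_def by blast
          then show False using edR by blast
        qed
        then obtain c where c: "ed = {w, c}" "c \<noteq> w" using ab by auto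
        have cR: "c \<in> R" using c True unfolding R'_def by blast
        show ?thesis
        proof (cases "c = r")
          case True then show ?thesis using c by simp
        next
          case False
          have e2: "{w, c} \<in> Eg" using edE c by simp
          have rc: "r \<noteq> c" using False by simp
          have "has_cycle V Eg"
            by (rule make_cycle[OF less.prems(1) less.prems(3) wr(1) wr(2) wr(3) cR rc wr(4) e2])
          then show ?thesis using nc by blast
        qed
      qed
    qed
    have "card {ed\<in>Eg. \<not> ed \<subseteq> R} \<le> card (insert {w, r} {ed\<in>Eg. \<not> ed \<subseteq> R'})"
      by (rule card_mono) (use fEg sub in auto)
    also have "\<dots> \<le> card {ed\<in>Eg. \<not> ed \<subseteq> R'} + 1"
    proof -
      have "finite {ed\<in>Eg. \<not> ed \<subseteq> R'}" using fEg by simp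
      then show ?thesis by (simp add: card_insert_if)
    qed
    finally show ?thesis using IH cR' lt by linarith
  qed
qed

lemma parent_map:
  assumes fV: "finite V" and Vc: "induced_connected Eg V"
    and RV: "R \<subseteq> V" and Rne: "R \<noteq> {}"
  shows "\<exists>p. inj_on p (V - R) \<and> (\<forall>w\<in>V - R. p w \<in> Eg \<and> w \<in> p w)"
  using RV Rne
proof (induction "card (V - R)" arbitrary: R rule: less_induct)
  case less
  show ?case
  proof (cases "V - R = {}")
    case True then show ?thesis by (intro exI[of _ "\<lambda>_. {}"]) (simp add: True)
  next
    case False
    then obtain w0 where w0: "w0 \<in> V" "w0 \<notin> R" by blast
    obtain r0 where r0: "r0 \<in> R" using less.prems(2) by blast
    have "(r0, w0) \<in> (grel Eg V)\<^sup>*" using Vc r0 w0 less.prems(1) unfolding induced_connected_grel by blast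
    then obtain w r where wr: "w \<in> V" "w \<notin> R" "r \<in> R" "{w, r} \<in> Eg"
      using crossing_edge[OF _ r0 w0(2)] by blast
    define R' where "R' = insert w R"
    have eqd: "V - R' = (V - R) - {w}" unfolding R'_def by blast
    have wVR: "w \<in> V - R" using wr by blast
    have fVR: "finite (V - R)" using fV by blast
    have cR': "card (V - R') = card (V - R) - 1" unfolding eqd using wVR fVR by simp
    have "card (V - R) > 0" using wVR fVR card_gt_0_iff by blast
    then have lt: "card (V - R') < card (V - R)" using cR' by linarith
    have R'V: "R' \<subseteq> V" "R' \<noteq> {}" using less.prems(1) wr(1) unfolding R'_def by auto
    obtain p where p: "inj_on p (V - R')" "\<forall>w\<in>V - R'. p w \<in> Eg \<and> w \<in> p w"
      using less.hyps[OF lt R'V] by blast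
    define q where "q = p(w := {w, r})"
    have "inj_on q (V - R)" unfolding inj_on_def
    proof (intro ballI impI)
      fix x y assume xy: "x \<in> V - R" "y \<in> V - R" "q x = q y"
      show "x = y"
      proof (cases "x = w"; cases "y = w")
        assume "x \<noteq> w" "y \<noteq> w"
        then show ?thesis using xy p(1) unfolding q_def inj_on_def R'_def by auto
      next
        assume a: "x = w" "y \<noteq> w"
        then have "y \<in> p y" "y \<notin> {w, r}" using p(2) xy wr unfolding R'_def by auto
        then show ?thesis using a xy unfolding q_def by auto
      next
        assume a: "x \<noteq> w" "y = w"
        then have "x \<in> p x" "x \<notin> {w, r}" using p(2) xy wr unfolding R'_def by auto
        then show ?thesis using a xy unfolding q_def by auto
      qed simp
    qed
    moreover have "\<forall>x\<in>V - R. q x \<in> Eg \<and> x \<in> q x" using p(2) wr unfolding q_def R'_def by auto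
    ultimately show ?thesis by blast
  qed
qed



lemma nbr_append_drop:
  assumes "k \<le> length As"
  shows "card (nbr (Cs @ drop k As) Y) \<le> card {j. j < length Cs \<and> Cs ! j \<inter> Y \<noteq> {}}
           + card {i. k \<le> i \<and> i < length As \<and> As ! i \<inter> Y \<noteq> {}}"
proof -
  let ?N1 = "{j. j < length Cs \<and> Cs ! j \<inter> Y \<noteq> {}}"
  let ?NB = "{i. k \<le> i \<and> i < length As \<and> As ! i \<inter> Y \<noteq> {}}"
  have sub: "nbr (Cs @ drop k As) Y \<subseteq> ?N1 \<union> (\<lambda>i. length Cs + (i - k)) ` ?NB"
  proof
    fix j assume j: "j \<in> nbr (Cs @ drop k As) Y"
    then have jl: "j < length Cs + (length As - k)" and ne: "(Cs @ drop k As) ! j \<inter> Y \<noteq> {}"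
      unfolding nbr_def by auto
    show "j \<in> ?N1 \<union> (\<lambda>i. length Cs + (i - k)) ` ?NB"
    proof (cases "j < length Cs")
      case True then show ?thesis using ne by (auto simp: nth_append)
    next
      case False
      define i where "i = k + (j - length Cs)"
      have "(Cs @ drop k As) ! j = As ! i" using False jl assms unfolding i_def by (simp add: nth_append)
      moreover have "i < length As" "k \<le> i" using False jl assms unfolding i_def by auto
      moreover have "j = length Cs + (i - k)" using False unfolding i_def by simp
      ultimately show ?thesis using ne by blast
    qed
  qed
  have f1: "finite ?N1" by (rule finite_subset[of _ "{..<length Cs}"]) auto
  have f2: "finite ?NB" by (rule finite_subset[of _ "{..<length As}"]) auto
  have "card (nbr (Cs @ drop k As) Y) \<le> card (?N1 \<union> (\<lambda>i. length Cs + (i - k)) ` ?NB)"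
    by (rule card_mono) (use f1 f2 sub in auto)
  also have "\<dots> \<le> card ?N1 + card ((\<lambda>i. length Cs + (i - k)) ` ?NB)" by (rule card_Un_le)
  also have "\<dots> \<le> card ?N1 + card ?NB" using card_image_le[OF f2] by simp
  finally show ?thesis .
qed

lemma nbr_split:
  assumes "k \<le> length As"
  shows "card (nbr As Y) = card {i. i < k \<and> As ! i \<inter> Y \<noteq> {}}
           + card {i. k \<le> i \<and> i < length As \<and> As ! i \<inter> Y \<noteq> {}}"
proof -
  have eq: "nbr As Y = {i. i < k \<and> As ! i \<inter> Y \<noteq> {}} \<union> {i. k \<le> i \<and> i < length As \<and> As ! i \<inter> Y \<noteq> {}}"
    unfolding nbr_def using assms by auto
  show ?thesis unfolding eq
    by (rule card_Un_disjoint) (auto intro: finite_subset[of _ "{..<length As}"] finite_subset[of _ "{..<k}"])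
qed

theorem theorem1p2:
  fixes E :: "'a set" and indep :: "'a set \<Rightarrow> bool" and As :: "'a set list"
    and e :: 'a and k :: nat
    and V :: "'v set" and Eg :: "'v set set" and \<phi> :: "'v \<Rightarrow> nat"
    and es :: "('v \<times> 'v) list"
  assumes "finite E"
    and pres: "is_presentation E indep As"
    and rk: "length As = mrank indep E"
    and "e \<in> E"
    and "k \<le> length As"
    and "\<forall>i<k. e \<in> As ! i"
    and "\<forall>j. k \<le> j \<and> j < length As \<longrightarrow> e \<notin> As ! j"
    and "minimal_presenting_graph E As e V Eg"
    and "is_tree V Eg"
    and "presenting_map E As e V Eg \<phi>"
    and "Eg = set (map (\<lambda>(u, v). {u, v}) es)"
    and "distinct (map (\<lambda>(u, v). {u, v}) es)"
  shows "is_presentation (E - {e}) (contract_indep E indep e)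
           (map (\<lambda>(u, v). As ! \<phi> u \<union> As ! \<phi> v - {e}) es @ drop k As)"
proof -
  note fin = assms(1) and eE = assms(4) and kr = assms(5) and eK = assms(6) and eNK = assms(7)
    and tree = assms(9) and pm = assms(10) and Egdef = assms(11) and dist = assms(12)
  define P where "P = partial_transversal E As"
  define r where "r = length As"
  define F where "F = (\<lambda>(u, v). As ! \<phi> u \<union> As ! \<phi> v - {e})"
  define edgf :: "'v \<times> 'v \<Rightarrow> 'v set" where "edgf = (\<lambda>(u, v). {u, v})"
  define A' where "A' = map F es @ drop k As"
  define m where "m = length es"
  have lenA': "length A' = m + (r - k)" unfolding A'_def m_def r_def by simp
  have indepP: "indep = P" unfolding P_def using pres unfolding is_presentation_def by auto
  have AsE: "\<forall>A\<in>set As. A \<subseteq> E" using pres unfolding is_presentation_def by auto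
  have AsiE: "As ! i \<subseteq> E" if "i < r" for i using AsE that unfolding r_def by auto
  have sg: "simple_graph V Eg" and Vne: "V \<noteq> {}" and Vc: "induced_connected Eg V"
    and nc: "\<not> has_cycle V Eg" using tree unfolding is_tree_def by auto
  have fV: "finite V" using sg unfolding simple_graph_def by blast
  have Kset: "{i. i < length As \<and> e \<in> As ! i} = {..<k}"
  proof (intro set_eqI iffI)
    fix i assume "i \<in> {i. i < length As \<and> e \<in> As ! i}"
    then have i: "i < length As" "e \<in> As ! i" by auto
    show "i \<in> {..<k}"
    proof (rule ccontr)
      assume "i \<notin> {..<k}"
      then have "k \<le> i" by simp
      then show False using eNK i by blast
    qed
  next
    fix i assume "i \<in> {..<k}"
    then show "i \<in> {i. i < length As \<and> e \<in> As ! i}" using eK kr by auto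
  qed
  have bij: "bij_betw \<phi> V {..<k}" using pm Kset unfolding presenting_map_def by simp
  have cardV: "card V = k" using bij_betw_same_card[OF bij] by simp
  have "card V > 0" using Vne fV card_gt_0_iff by blast
  then have k1: "k \<ge> 1" using cardV by linarith
  have phiV: "\<phi> v < k" if "v \<in> V" for v using bij that unfolding bij_betw_def by auto
  have injphi: "inj_on \<phi> V" using bij unfolding bij_betw_def by auto
  have EgV: "\<forall>ed\<in>Eg. ed \<subseteq> V" using sg unfolding simple_graph_def by fastforce
  have fEg: "finite Eg" by (rule finite_subset[of Eg "Pow V"]) (use EgV fV in auto)
  have esV: "u \<in> V" "v \<in> V" if "(u, v) \<in> set es" for u v
  proof -
    have "(\<lambda>(u, v). {u, v}) (u, v) \<in> (\<lambda>(u, v). {u, v}) ` set es" using that by (rule imageI)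
    then have "{u, v} \<in> Eg" unfolding Egdef by simp
    then show "u \<in> V" "v \<in> V" using EgV by auto
  qed
  have cardEg: "card Eg = m" unfolding Egdef m_def using distinct_card[OF dist] by simp
  have mk: "m \<le> k - 1"
  proof -
    obtain v0 where v0: "v0 \<in> V" using Vne by blast
    have "{ed\<in>Eg. \<not> ed \<subseteq> {v0}} = Eg"
    proof (intro set_eqI iffI)
      fix ed assume "ed \<in> Eg"
      then obtain a b where "ed = {a, b}" "a \<noteq> b" using sg unfolding simple_graph_def by blast
      then have "\<not> ed \<subseteq> {v0}" by auto
      then show "ed \<in> {ed\<in>Eg. \<not> ed \<subseteq> {v0}}" using \<open>ed \<in> Eg\<close> by simp
    qed simp
    moreover have "induced_connected Eg {v0}" unfolding induced_connected_def by simp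
    ultimately have "card Eg \<le> card (V - {v0})" using tree_count[OF sg nc Vc, of "{v0}"] v0 by simp
    then show ?thesis using cardEg cardV v0 fV by simp
  qed
  obtain T where T: "P T" "card T = r"
  proof -
    have fS: "finite (card ` {I. I \<subseteq> E \<and> P I})" using fin by simp
    have "{} \<in> {I. I \<subseteq> E \<and> P I}" unfolding P_def using pt_empty by auto
    then have "Max (card ` {I. I \<subseteq> E \<and> P I}) \<in> card ` {I. I \<subseteq> E \<and> P I}" using fS by (intro Max_in) auto
    moreover have "r = Max (card ` {I. I \<subseteq> E \<and> P I})" using rk indepP unfolding r_def mrank_def by simp
    ultimately show ?thesis using that by auto
  qed
  have Pe: "P {e}"
  proof -
    have "0 < length As" using k1 kr by linarith
    moreover have "e \<in> As ! 0" using eK k1 by simp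
    ultimately show ?thesis unfolding P_def partial_transversal_def using eE
      by (intro conjI exI[of _ "\<lambda>_. 0"]) auto
  qed
  have setA': "\<forall>A\<in>set A'. A \<subseteq> E - {e}"
  proof
    fix A assume "A \<in> set A'"
    then consider "A \<in> set (map F es)" | "A \<in> set (drop k As)" unfolding A'_def by auto
    then show "A \<subseteq> E - {e}"
    proof cases
      case 1
      then obtain u v where uv: "(u, v) \<in> set es" "A = F (u, v)" by auto
      have "\<phi> u < k" "\<phi> v < k" using phiV esV[OF uv(1)] by auto
      then have "\<phi> u < r" "\<phi> v < r" using kr unfolding r_def by linarith+
      then have "As ! \<phi> u \<subseteq> E" "As ! \<phi> v \<subseteq> E" using AsiE by auto
      then show ?thesis using uv(2) unfolding F_def by auto
    next
      case 2
      then obtain i where i: "i < length As - k" "A = As ! (k + i)" by (auto simp: in_set_conv_nth)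
      have "k + i < length As" using i by simp
      then have "A \<subseteq> E" "e \<notin> A" using AsiE eNK i(2) unfolding r_def by auto
      then show ?thesis by blast
    qed
  qed
  have Egedgf: "Eg = set (map edgf es)" unfolding edgf_def by (simp add: Egdef)
  define idx where "idx = (\<lambda>ed. SOME j. j < m \<and> edgf (es ! j) = ed)"
  have idx: "idx ed < m \<and> edgf (es ! idx ed) = ed" if "ed \<in> Eg" for ed
  proof -
    have "ed \<in> set (map edgf es)" using that unfolding Egedgf .
    then obtain j where j: "j < length (map edgf es)" "map edgf es ! j = ed" unfolding in_set_conv_nth by blast
    have "\<exists>j. j < m \<and> edgf (es ! j) = ed" using j unfolding m_def by (intro exI[of _ j]) simp
    then show ?thesis unfolding idx_def by (rule someI_ex)
  qed
  have A'low: "A' ! j = As ! \<phi> u \<union> As ! \<phi> v - {e}" if "j < m" "es ! j = (u, v)" for j u v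
    using that unfolding A'_def m_def F_def by (simp add: nth_append)
  have A'high: "A' ! (m + i) = As ! (k + i)" if "k + i < r" for i
    using that kr unfolding A'_def m_def r_def by (simp add: nth_append)
  have dirA: "partial_transversal (E - {e}) A' X" if X: "X \<subseteq> E - {e}" "P (insert e X)" for X
  proof -
    obtain g where g: "inj_on g (insert e X)" "\<forall>x\<in>insert e X. g x < r \<and> x \<in> As ! g x"
      using X(2) unfolding P_def partial_transversal_def r_def by blast
    have ge: "g e < k"
    proof (rule ccontr)
      assume "\<not> g e < k"
      then show False using g(2) eNK unfolding r_def by auto
    qed
    have imV: "\<phi> ` V = {..<k}" using bij unfolding bij_betw_def by simp
    define \<rho> where "\<rho> = inv_into V \<phi> (g e)"
    have \<rho>: "\<rho> \<in> V" "\<phi> \<rho> = g e" unfolding \<rho>_def using ge imV by (auto intro: inv_into_into f_inv_into_f)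
    obtain p where p: "inj_on p (V - {\<rho>})" "\<forall>w\<in>V - {\<rho>}. p w \<in> Eg \<and> w \<in> p w"
      using parent_map[OF fV Vc, of "{\<rho>}"] \<rho>(1) by blast
    define f where "f = (\<lambda>x. if g x < k then idx (p (inv_into V \<phi> (g x))) else m + (g x - k))"
    have low: "inv_into V \<phi> (g x) \<in> V - {\<rho>} \<and> \<phi> (inv_into V \<phi> (g x)) = g x" if x: "x \<in> X" "g x < k" for x
    proof -
      have gi: "g x \<in> \<phi> ` V" using x(2) imV by simp
      have w1: "inv_into V \<phi> (g x) \<in> V" using gi by (rule inv_into_into)
      have w2: "\<phi> (inv_into V \<phi> (g x)) = g x" using gi by (rule f_inv_into_f)
      have "x \<noteq> e" using x(1) X(1) by blast
      then have "g x \<noteq> g e" using g(1) x(1) unfolding inj_on_def by blast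
      then have "inv_into V \<phi> (g x) \<noteq> \<rho>"
      proof (intro notI)
        assume "inv_into V \<phi> (g x) = \<rho>"
        then have "g x = g e" using w2 \<rho>(2) by simp
        then show False using \<open>g x \<noteq> g e\<close> by simp
      qed
      then show ?thesis using w1 w2 by blast
    qed
    have "inj_on f X"
      unfolding inj_on_def
    proof (intro ballI impI)
      fix x y assume xy: "x \<in> X" "y \<in> X" "f x = f y"
      have gxy: "g x = g y \<Longrightarrow> x = y" using g(1) xy(1,2) unfolding inj_on_def by blast
      show "x = y"
      proof (cases "g x < k"; cases "g y < k")
        assume a: "g x < k" "g y < k"
        let ?wx = "inv_into V \<phi> (g x)" and ?wy = "inv_into V \<phi> (g y)"
        have wx: "?wx \<in> V - {\<rho>}" "\<phi> ?wx = g x" using low[OF xy(1) a(1)] by auto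
        have wy: "?wy \<in> V - {\<rho>}" "\<phi> ?wy = g y" using low[OF xy(2) a(2)] by auto
        have i1: "idx (p ?wx) = idx (p ?wy)" using xy(3) a unfolding f_def by simp
        have "p ?wx \<in> Eg" "p ?wy \<in> Eg" using p(2) wx(1) wy(1) by auto
        then have e1: "edgf (es ! idx (p ?wx)) = p ?wx" and e2: "edgf (es ! idx (p ?wy)) = p ?wy" using idx by auto
        have "p ?wx = edgf (es ! idx (p ?wx))" using e1 by simp
        also have "\<dots> = edgf (es ! idx (p ?wy))" using i1 by simp
        also have "\<dots> = p ?wy" using e2 by simp
        finally have pe: "p ?wx = p ?wy" .
        have ww: "?wx = ?wy" using inj_onD[OF p(1) pe wx(1) wy(1)] .
        have "g x = \<phi> ?wx" using wx(2) by simp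
        also have "\<dots> = \<phi> ?wy" using ww by (rule arg_cong)
        also have "\<dots> = g y" using wy(2) by simp
        finally show ?thesis using gxy by blast
      next
        assume a: "\<not> g x < k" "\<not> g y < k"
        then show ?thesis using xy(3) gxy unfolding f_def by simp
      next
        assume a: "g x < k" "\<not> g y < k"
        have "p (inv_into V \<phi> (g x)) \<in> Eg" using low[OF xy(1) a(1)] p(2) by auto
        then have "f x < m" using a idx unfolding f_def by simp
        moreover have "f y \<ge> m" using a unfolding f_def by simp
        ultimately show ?thesis using xy(3) by simp
      next
        assume a: "\<not> g x < k" "g y < k"
        have "p (inv_into V \<phi> (g y)) \<in> Eg" using low[OF xy(2) a(2)] p(2) by auto
        then have "f y < m" using a idx unfolding f_def by simp
        moreover have "f x \<ge> m" using a unfolding f_def by simp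
        ultimately show ?thesis using xy(3) by simp
      qed
    qed
    moreover have "f x < length A' \<and> x \<in> A' ! f x" if x: "x \<in> X" for x
    proof (cases "g x < k")
      case True
      let ?w = "inv_into V \<phi> (g x)"
      have w: "?w \<in> V - {\<rho>}" "\<phi> ?w = g x" using low[OF x True] by auto
      have pw: "p ?w \<in> Eg" "?w \<in> p ?w" using p(2) w(1) by auto
      define j where "j = idx (p ?w)"
      have j: "j < m" "edgf (es ! j) = p ?w" using idx[OF pw(1)] unfolding j_def by auto
      obtain u v where uv: "es ! j = (u, v)" by (cases "es ! j")
      have wuv: "?w \<in> {u, v}" using j(2) pw(2) uv unfolding edgf_def by simp
      have xg: "x \<in> As ! g x" "x \<noteq> e" using g(2) x X(1) by auto
      have "x \<in> As ! \<phi> ?w" using xg(1) w(2) by simp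
      then have "x \<in> As ! \<phi> u \<union> As ! \<phi> v" using wuv by blast
      then have "x \<in> A' ! j" using A'low[OF j(1) uv] xg(2) by blast
      moreover have "f x = j" unfolding f_def j_def using True by simp
      ultimately show ?thesis using j(1) lenA' by simp
    next
      case False
      have gr: "g x < r" using g(2) x by auto
      have "f x = m + (g x - k)" unfolding f_def using False by simp
      moreover have "A' ! (m + (g x - k)) = As ! g x" using A'high[of "g x - k"] False gr by simp
      moreover have "x \<in> As ! g x" using g(2) x by auto
      ultimately show ?thesis using lenA' False gr by simp
    qed
    ultimately show ?thesis unfolding partial_transversal_def using X(1) by (intro conjI exI[of _ f]) auto
  qed
  have TP: "partial_transversal E As T" "card T = length As" using T unfolding P_def r_def by auto
  have lenF: "length (map F es) = m" unfolding m_def by simp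
  have nbrA': "card (nbr A' Y) \<le> card {j. j < m \<and> map F es ! j \<inter> Y \<noteq> {}}
           + card {i. k \<le> i \<and> i < length As \<and> As ! i \<inter> Y \<noteq> {}}" for Y
    using nbr_append_drop[OF kr, of "map F es" Y] unfolding A'_def lenF .
  have distE: "distinct (map edgf es)" using dist unfolding edgf_def .
  have dirB: "P (insert e X)" if X: "partial_transversal (E - {e}) A' X" for X
  proof -
    have XE: "X \<subseteq> E - {e}" using X unfolding partial_transversal_def by blast
    have fX: "finite X" using XE fin finite_subset by blast
    have PX: "P X"
    proof (rule ccontr)
      assume nP: "\<not> P X"
      define ZS where "ZS = {Z. Z \<subseteq> X \<and> \<not> P Z}"
      have fZS: "finite ZS" unfolding ZS_def by (rule finite_subset[of _ "Pow X"]) (use fX in auto)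
      have "X \<in> ZS" unfolding ZS_def using nP by simp
      then have "Min (card ` ZS) \<in> card ` ZS" using fZS by (intro Min_in) auto
      then obtain Z where Z: "Z \<in> ZS" "card Z = Min (card ` ZS)" by auto
      have ZX: "Z \<subseteq> X" and nPZ: "\<not> P Z" using Z(1) unfolding ZS_def by auto
      have ZE: "Z \<subseteq> E" using ZX XE by blast
      have fZ: "finite Z" using ZX fX finite_subset by blast
      have Zmin: "\<forall>Z'. Z' \<subset> Z \<longrightarrow> P Z'"
      proof (intro allI impI)
        fix Z' assume Z': "Z' \<subset> Z"
        show "P Z'"
        proof (rule ccontr)
          assume "\<not> P Z'"
          then have "Z' \<in> ZS" unfolding ZS_def using Z' ZX by auto
          then have "card Z \<le> card Z'" using Z(2) fZS by simp
          moreover have "card Z' < card Z" using Z' fZ by (simp add: psubset_card_mono)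
          ultimately show False by simp
        qed
      qed
      obtain Z0 where Z0: "Z0 \<subseteq> Z" "card (nbr As Z0) < card Z0"
        using pt_hall[OF fZ ZE nPZ[unfolded P_def]] by blast
      have defZ: "card (nbr As Z) < card Z"
      proof (cases "Z0 = Z")
        case True then show ?thesis using Z0 by simp
      next
        case False
        then have "P Z0" using Zmin Z0(1) by blast
        then have "card Z0 \<le> card (nbr As Z0)" using pt_triv[of E As Z0 Z0] unfolding P_def by simp
        then show ?thesis using Z0(2) by simp
      qed
      define W where "W = {v\<in>V. As ! \<phi> v \<inter> Z \<noteq> {}}"
      define R where "R = V - W"
      have Rc: "induced_connected Eg R"
        unfolding induced_connected_grel
      proof (intro ballI)
        fix a b assume ab: "a \<in> R" "b \<in> R"
        show "(a, b) \<in> (grel Eg R)\<^sup>*"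
        proof (cases "a = b")
          case True then show ?thesis by simp
        next
          case False
          have aV: "a \<in> V" "b \<in> V" using ab unfolding R_def by auto
          define Xab where "Xab = As ! \<phi> a \<union> As ! \<phi> b"
          define S where "S = {u \<in> V. As ! \<phi> u \<subseteq> dual_closure E (partial_transversal E As) Xab}"
          have Sc: "induced_connected Eg S"
            using pm aV False unfolding presenting_map_def S_def Xab_def by blast
          have XabE: "Xab \<subseteq> E" unfolding Xab_def using AsiE phiV aV kr unfolding r_def
            by (meson Un_least less_le_trans)
          have disj: "Z \<inter> Xab = {}" using ab unfolding Xab_def R_def W_def using aV by auto
          have SR: "S \<subseteq> R"
          proof
            fix u assume u: "u \<in> S"
            show "u \<in> R"
            proof (rule ccontr)
              assume "u \<notin> R"
              then obtain z where z: "z \<in> As ! \<phi> u" "z \<in> Z" using u unfolding R_def W_def S_def by auto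
              have "z \<notin> dual_closure E (partial_transversal E As) Xab"
                using lemD[OF fin TP ZE nPZ[unfolded P_def] Zmin[unfolded P_def] z(2) XabE disj] .
              then show False using u z(1) unfolding S_def by auto
            qed
          qed
          have inS: "c \<in> S" if "c \<in> {a, b}" for c
          proof -
            have cV: "c \<in> V" using that aV by auto
            have sub: "As ! \<phi> c \<subseteq> Xab" unfolding Xab_def using that by auto
            have "As ! \<phi> c \<subseteq> dual_closure E (partial_transversal E As) Xab"
            proof
              fix x assume x: "x \<in> As ! \<phi> c"
              have "x \<in> E" using x sub XabE by blast
              moreover have "insert x Xab = Xab" using x sub by blast
              ultimately show "x \<in> dual_closure E (partial_transversal E As) Xab"
                unfolding dual_closure_def mclosure_def by simp
            qed
            then show ?thesis unfolding S_def using cV by simp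
          qed
          have "(a, b) \<in> (grel Eg S)\<^sup>*" using Sc inS unfolding induced_connected_grel by blast
          then show ?thesis using grel_mono[OF SR] by blast
        qed
      qed
      define N1 where "N1 = {j. j < m \<and> map F es ! j \<inter> Z \<noteq> {}}"
      define NA where "NA = {i. i < k \<and> As ! i \<inter> Z \<noteq> {}}"
      define NB where "NB = {i. k \<le> i \<and> i < length As \<and> As ! i \<inter> Z \<noteq> {}}"
      have c1: "card Z \<le> card (nbr A' Z)" using pt_triv[OF X ZX] .
      have c2: "card (nbr A' Z) \<le> card N1 + card NB" using nbrA'[of Z] unfolding N1_def NB_def .
      have c3: "card N1 \<le> card {ed\<in>Eg. \<not> ed \<subseteq> R}"
      proof -
        have inj: "inj_on (\<lambda>j. edgf (es ! j)) N1"
          unfolding inj_on_def N1_def using distE unfolding m_def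
          by (auto simp: nth_eq_iff_index_eq[symmetric] distinct_conv_nth)
        have "(\<lambda>j. edgf (es ! j)) ` N1 \<subseteq> {ed\<in>Eg. \<not> ed \<subseteq> R}"
        proof
          fix ed assume "ed \<in> (\<lambda>j. edgf (es ! j)) ` N1"
          then obtain j where j: "j \<in> N1" "ed = edgf (es ! j)" by blast
          have jm: "j < m" using j(1) unfolding N1_def by simp
          obtain u v where uv: "es ! j = (u, v)" by (cases "es ! j")
          have uvs: "(u, v) \<in> set es" using jm uv unfolding m_def by (metis nth_mem)
          have uvV: "u \<in> V" "v \<in> V" using esV[OF uvs] by auto
          have "map F es ! j \<inter> Z \<noteq> {}" using j(1) unfolding N1_def by simp
          then have "(As ! \<phi> u \<union> As ! \<phi> v) \<inter> Z \<noteq> {}" using jm uv unfolding m_def F_def by auto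
          then have "u \<in> W \<or> v \<in> W" unfolding W_def using uvV by auto
          then have "\<not> {u, v} \<subseteq> R" unfolding R_def by auto
          moreover have "ed \<in> Eg" using j(2) jm unfolding Egedgf m_def by simp
          moreover have "ed = {u, v}" using j(2) uv unfolding edgf_def by simp
          ultimately show "ed \<in> {ed\<in>Eg. \<not> ed \<subseteq> R}" by simp
        qed
        moreover have "finite {ed\<in>Eg. \<not> ed \<subseteq> R}" using fEg by simp
        ultimately show ?thesis using card_inj_on_le[OF inj] by blast
      qed
      have c4: "card {ed\<in>Eg. \<not> ed \<subseteq> R} \<le> card W"
      proof (cases "R = {}")
        case False
        have "R \<subseteq> V" unfolding R_def by blast
        then have "card {ed\<in>Eg. \<not> ed \<subseteq> R} \<le> card (V - R)" using tree_count[OF sg nc Vc _ False Rc] by blast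
        moreover have "V - R = W" unfolding R_def W_def by blast
        ultimately show ?thesis by simp
      next
        case True
        then have "W = V" unfolding R_def W_def by blast
        moreover have "card {ed\<in>Eg. \<not> ed \<subseteq> R} \<le> card Eg" using fEg by (intro card_mono) auto
        ultimately have "card W = k" "card {ed\<in>Eg. \<not> ed \<subseteq> R} \<le> card Eg" using cardV by auto
        then show ?thesis using cardEg mk k1 by linarith
      qed
      have c5: "card W \<le> card NA"
      proof -
        have "inj_on \<phi> W" using injphi unfolding W_def by (rule inj_on_subset) auto
        moreover have "\<phi> ` W \<subseteq> NA" unfolding W_def NA_def using phiV by auto
        moreover have "finite NA" unfolding NA_def by (rule finite_subset[of _ "{..<k}"]) auto
        ultimately show ?thesis using card_inj_on_le by blast
      qed
      have c6: "card (nbr As Z) = card NA + card NB" using nbr_split[OF kr, of Z] unfolding NA_def NB_def .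
      show False using c1 c2 c3 c4 c5 c6 defZ by linarith
    qed
    show ?thesis
    proof (rule ccontr)
      assume nP: "\<not> P (insert e X)"
      have iE: "insert e X \<subseteq> E" using XE eE by blast
      have fi: "finite (insert e X)" using fX by simp
      obtain Z where Z: "Z \<subseteq> insert e X" "card (nbr As Z) < card Z"
        using pt_hall[OF fi iE nP[unfolded P_def]] by blast
      show False
      proof (cases "e \<in> Z")
        case False
        then have "Z \<subseteq> X" using Z(1) by blast
        then have "card Z \<le> card (nbr As Z)" using pt_triv[of E As X Z] PX unfolding P_def by blast
        then show False using Z(2) by simp
      next
        case True
        define Y where "Y = Z - {e}"
        have YX: "Y \<subseteq> X" using Z(1) unfolding Y_def by blast
        have fZ: "finite Z" using Z(1) fi finite_subset by blast
        have cY: "card Y = card Z - 1" unfolding Y_def using True fZ by simp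
        have d1: "card Y \<le> card (nbr A' Y)" using pt_triv[OF X YX] .
        have d2: "card (nbr A' Y) \<le> card {j. j < m \<and> map F es ! j \<inter> Y \<noteq> {}}
           + card {i. k \<le> i \<and> i < length As \<and> As ! i \<inter> Y \<noteq> {}}" using nbrA' .
        have d3: "card {j. j < m \<and> map F es ! j \<inter> Y \<noteq> {}} \<le> m"
          using card_mono[of "{..<m}" "{j. j < m \<and> map F es ! j \<inter> Y \<noteq> {}}"] by auto
        have d4: "card {i. k \<le> i \<and> i < length As \<and> As ! i \<inter> Y \<noteq> {}}
            \<le> card {i. k \<le> i \<and> i < length As \<and> As ! i \<inter> Z \<noteq> {}}"
          by (rule card_mono) (auto simp: Y_def intro: finite_subset[of _ "{..<length As}"])
        have d5: "{i. i < k \<and> As ! i \<inter> Z \<noteq> {}} = {..<k}" using True eK by auto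
        have d6: "card (nbr As Z) = k + card {i. k \<le> i \<and> i < length As \<and> As ! i \<inter> Z \<noteq> {}}"
          using nbr_split[OF kr, of Z] unfolding d5 by simp
        have "card Z \<ge> 1" using True fZ by (metis card_0_eq empty_iff less_one not_le)
        then show False using d1 d2 d3 d4 d6 cY mk k1 Z(2) by linarith
      qed
    qed
  qed
  show ?thesis
    unfolding is_presentation_def
  proof (intro conjI allI)
    show "\<forall>A\<in>set (map (\<lambda>(u, v). As ! \<phi> u \<union> As ! \<phi> v - {e}) es @ drop k As). A \<subseteq> E - {e}"
      using setA' unfolding A'_def F_def .
    fix X
    have "contract_indep E indep e X \<longleftrightarrow> partial_transversal (E - {e}) A' X"
    proof
      assume "contract_indep E indep e X"
      then show "partial_transversal (E - {e}) A' X" using dirA Pe unfolding contract_indep_def indepP by auto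
    next
      assume a: "partial_transversal (E - {e}) A' X"
      then have "X \<subseteq> E - {e}" unfolding partial_transversal_def by blast
      then show "contract_indep E indep e X" using dirB[OF a] Pe unfolding contract_indep_def indepP by auto
    qed
    then show "contract_indep E indep e X =
         partial_transversal (E - {e}) (map (\<lambda>(u, v). As ! \<phi> u \<union> As ! \<phi> v - {e}) es @ drop k As) X"
      unfolding A'_def F_def .
  qed
qed

end
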